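(* Let $f:\mathbb{R}^d\to\mathbb{R}$ be convex and differentiable, $h:\mathbb{R}^d\to\mathbb{R}\cup\{+\infty\}$ proper, closed and convex, $F=f+h$. Let $x\in\mathbb{R}^d$ and $\lambda>0$ be such that $\mathrm{(LS)}(x,\lambda)$ holds, and let $x^+=x-\lambda G^{f}_{\lambda h}(x)$. Then $$F(x^+)\le F(x)-\tfrac{\lambda}{2}\|G^{f}_{\lambda h}(x)\|^2 .$$
   Context: $\mathbb{R}^d$ carries the standard inner product $\langle\cdot,\cdot\rangle$ and Euclidean norm $\|\cdot\|$. For $\lambda>0$ the proximal operator is $\mathrm{prox}_{\lambda h}(w)=\arg\min_{u\in\mathbb{R}^d}\big\{\lambda h(u)+\tfrac12\|u-w\|^2\big\}$. The gradient mapping is $G^{f}_{\lambda h}(x)=\frac{1}{\lambda}\Big(x-\mathrm{prox}_{\lambda h}\big(x-\lambda\nabla f(x)\big)\Big)$. For $x\in\mathbb{R}^d$ and $\lambda>0$, the linesearch condition $\mathrm{(LS)}(x,\lambda)$ is: with $G=G^{f}_{\lambda h}(x)$, $f(x-2\lambda G)\le f(x-\lambda G)-\lambda\langle G,\nabla f(x)\rangle+\tfrac{\lambda}{2}\|G\|^2$. *)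

theory Defs
  imports "HOL-Analysis.Analysis" "HOL-Library.Extended_Real"
begin

definition ext_epigraph :: "('a \<Rightarrow> ereal) \<Rightarrow> ('a \<times> real) set" where
  "ext_epigraph h = {(x, t). h x \<le> ereal t}"

definition proper_fun :: "('a \<Rightarrow> ereal) \<Rightarrow> bool" where
  "proper_fun h \<longleftrightarrow> (\<exists>x. h x \<noteq> \<infinity>) \<and> (\<forall>x. h x \<noteq> -\<infinity>)"

definition closed_fun :: "('a::topological_space \<Rightarrow> ereal) \<Rightarrow> bool" where
  "closed_fun h \<longleftrightarrow> closed (ext_epigraph h)"

definition convex_fun :: "('a::real_vector \<Rightarrow> ereal) \<Rightarrow> bool" where
  "convex_fun h \<longleftrightarrow> convex (ext_epigraph h)"

definition prox :: "real \<Rightarrow> ('a::real_normed_vector \<Rightarrow> ereal) \<Rightarrow> 'a \<Rightarrow> 'a" where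
  "prox lam h w = arg_min (\<lambda>u. ereal lam * h u + ereal (1/2 * (norm (u - w))\<^sup>2)) (\<lambda>_. True)"

definition grad_map :: "('a::real_normed_vector \<Rightarrow> 'a) \<Rightarrow> real \<Rightarrow> ('a \<Rightarrow> ereal) \<Rightarrow> 'a \<Rightarrow> 'a" where
  "grad_map gradf lam h x = (1 / lam) *\<^sub>R (x - prox lam h (x - lam *\<^sub>R gradf x))"

definition LS :: "('a::real_inner \<Rightarrow> real) \<Rightarrow> ('a \<Rightarrow> 'a) \<Rightarrow> ('a \<Rightarrow> ereal) \<Rightarrow> 'a \<Rightarrow> real \<Rightarrow> bool" where
  "LS f gradf h x lam \<longleftrightarrow>
     (let G = grad_map gradf lam h x in
       f (x - (2 * lam) *\<^sub>R G) \<le> f (x - lam *\<^sub>R G) - lam * (G \<bullet> gradf x) + lam / 2 * (norm G)\<^sup>2)"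

end

theory Submission
  imports Defs
begin

lemma affine_minor:
  fixes h :: "'a::euclidean_space \<Rightarrow> ereal"
  assumes hp: "proper_fun h" and hc: "closed_fun h" and hv: "convex_fun h"
  shows "\<exists>a b. \<forall>u. ereal (a \<bullet> u + b) \<le> h u"
proof -
  obtain x0 where x0: "h x0 \<noteq> \<infinity>" using hp unfolding proper_fun_def by auto
  have ninf: "\<And>u. h u \<noteq> -\<infinity>" using hp unfolding proper_fun_def by auto
  then obtain r0 where r0: "h x0 = ereal r0" using x0 by (cases "h x0") auto
  have nz: "(x0, r0 - 1) \<notin> ext_epigraph h" using r0 by (simp add: ext_epigraph_def)
  obtain aa bb where sep: "aa \<bullet> (x0, r0 - 1) < bb" "\<forall>z\<in>ext_epigraph h. bb < aa \<bullet> z"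
    using separating_hyperplane_closed_point[OF hv[unfolded convex_fun_def] hc[unfolded closed_fun_def] nz]
    by blast
  obtain a0 c where aa: "aa = (a0, c)" by (cases aa)
  have "(x0, r0) \<in> ext_epigraph h" using r0 by (simp add: ext_epigraph_def)
  then have "bb < a0 \<bullet> x0 + c * r0" using sep(2) aa by (auto simp: inner_Pair)
  moreover have "a0 \<bullet> x0 + c * (r0 - 1) < bb" using sep(1) aa by (auto simp: inner_Pair)
  ultimately have cpos: "c > 0" by (simp add: algebra_simps)
  have "ereal ((-(1/c) *\<^sub>R a0) \<bullet> u + bb / c) \<le> h u" for u
  proof (cases "h u")
    case (real s)
    then have "(u, s) \<in> ext_epigraph h" by (simp add: ext_epigraph_def)
    then have "bb < a0 \<bullet> u + c * s" using sep(2) aa by (auto simp: inner_Pair)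
    then have "(bb - a0 \<bullet> u) / c \<le> s" using cpos by (simp add: field_simps)
    then show ?thesis using real cpos by (simp add: field_simps)
  qed (use ninf in auto)
  then show ?thesis by blast
qed

lemma prox_exists:
  fixes h :: "'a::euclidean_space \<Rightarrow> ereal"
  assumes hp: "proper_fun h" and hc: "closed_fun h" and hv: "convex_fun h" and lam: "lam > 0"
  shows "\<exists>p. \<forall>u. ereal lam * h p + ereal (1/2 * (norm (p - w))\<^sup>2) \<le> ereal lam * h u + ereal (1/2 * (norm (u - w))\<^sup>2)"
proof -
  obtain a b where ab: "\<And>u. ereal (a \<bullet> u + b) \<le> h u" using affine_minor[OF hp hc hv] by blast
  have ninf: "\<And>u. h u \<noteq> -\<infinity>" using hp unfolding proper_fun_def by auto
  obtain x0 where x0: "h x0 \<noteq> \<infinity>" using hp unfolding proper_fun_def by auto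
  then obtain r0 where r0: "h x0 = ereal r0" using ninf by (cases "h x0") auto
  define M where "M = lam * r0 + 1/2 * (norm (x0 - w))\<^sup>2"
  define g where "g = (\<lambda>z::'a \<times> real. lam * snd z + 1/2 * (norm (fst z - w))\<^sup>2)"
  define K where "K = ext_epigraph h \<inter> {z. g z \<le> M}"
  have contg: "continuous_on UNIV g" unfolding g_def by (intro continuous_intros)
  have "closed K" unfolding K_def
    using hc[unfolded closed_fun_def] contg
    by (intro closed_Int) (auto intro: closed_Collect_le continuous_intros)
  define A where "A = lam * norm a"
  define C where "C = M - lam * b + lam * norm a * norm w"
  define R where "R = 1 + 2 * \<bar>C\<bar> + 2 * A"
  have A0: "A \<ge> 0" using lam by (simp add: A_def)
  have Kb: "norm (u - w) \<le> R \<and> b - norm a * (norm w + R) \<le> t \<and> t \<le> M / lam"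
    if z: "(u, t) \<in> K" for u t
  proof -
    have ht: "h u \<le> ereal t" and gM: "lam * t + 1/2 * (norm (u - w))\<^sup>2 \<le> M"
      using z by (auto simp: K_def ext_epigraph_def g_def)
    have aub: "a \<bullet> u + b \<le> t" using ab[of u] ht by (metis ereal_less_eq(3) order_trans)
    define r where "r = norm (u - w)"
    have r0': "r \<ge> 0" by (simp add: r_def)
    have nu: "norm u \<le> norm w + r" unfolding r_def by (metis add.commute norm_triangle_sub)
    have au: "a \<bullet> (u - w) \<ge> - norm a * r" unfolding r_def
      using Cauchy_Schwarz_ineq2[of a "u - w"] by linarith
    have aw: "a \<bullet> w \<ge> - norm a * norm w"
      using Cauchy_Schwarz_ineq2[of a w] by linarith
    have "a \<bullet> u = a \<bullet> (u - w) + a \<bullet> w" by (simp add: inner_diff_right)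
    then have "a \<bullet> u \<ge> - norm a * r - norm a * norm w" using au aw by linarith
    then have "lam * (a \<bullet> u) \<ge> lam * (- norm a * r - norm a * norm w)"
      using lam by (intro mult_left_mono) auto
    have l2: "lam * (a \<bullet> u + b) \<le> lam * t" using aub lam by (intro mult_left_mono) auto
    have q: "1/2 * r^2 \<le> C + A * r"
    proof -
      have e1: "lam * (- norm a * r - norm a * norm w) = - (A * r) - lam * norm a * norm w"
        by (simp add: A_def algebra_simps)
      have e2: "lam * (a \<bullet> u + b) = lam * (a \<bullet> u) + lam * b" by (simp add: algebra_simps)
      have "1/2 * r^2 \<le> M - lam * t" using gM r_def by simp
      then show ?thesis using l2 e1 e2 \<open>lam * (a \<bullet> u) \<ge> _\<close> unfolding C_def by linarith
    qed
    have rR: "r \<le> R"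
    proof (cases "r \<le> 1")
      case True then show ?thesis using A0 by (simp add: R_def)
    next
      case False
      have "\<bar>C\<bar> * 1 \<le> \<bar>C\<bar> * r" using False by (intro mult_left_mono) auto
      then have c1: "2 * C \<le> 2 * \<bar>C\<bar> * r" by linarith
      have "r * r \<le> (2 * \<bar>C\<bar> + 2 * A) * r" using q c1
        by (simp add: power2_eq_square algebra_simps)
      then have "r \<le> 2 * \<bar>C\<bar> + 2 * A" using False by simp
      then show ?thesis by (simp add: R_def)
    qed
    have "a \<bullet> u \<ge> - (norm a * norm u)"
      using Cauchy_Schwarz_ineq2[of a u] by linarith
    moreover have "norm a * norm u \<le> norm a * (norm w + R)"
      using nu rR by (intro mult_left_mono) auto
    ultimately have lo: "b - norm a * (norm w + R) \<le> t" using aub by linarith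
    have "lam * t \<le> M" using gM zero_le_power2[of "norm (u - w)"] by linarith
    then have "t \<le> M / lam" using lam by (simp add: field_simps)
    then show ?thesis using lo rR r_def by auto
  qed
  have "K \<subseteq> cball w R \<times> {b - norm a * (norm w + R) .. M / lam}"
    using Kb by (force simp: dist_norm norm_minus_commute)
  then have "bounded K" by (rule bounded_subset[OF bounded_Times[OF bounded_cball bounded_closed_interval]])
  then have "compact K" using \<open>closed K\<close> by (simp add: compact_eq_bounded_closed)
  have x0K: "(x0, r0) \<in> K" using r0 by (simp add: K_def ext_epigraph_def g_def M_def)
  obtain z where zK: "z \<in> K" and zmin: "\<And>y. y \<in> K \<Longrightarrow> g z \<le> g y"
    using continuous_attains_inf[OF \<open>compact K\<close> _ continuous_on_subset[OF contg]] x0K by blast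
  obtain p tp where z: "z = (p, tp)" by (cases z)
  have hpt: "h p \<le> ereal tp" and gzM: "g z \<le> M" using zK z by (auto simp: K_def ext_epigraph_def)
  then obtain sp where sp: "h p = ereal sp" using ninf[of p] by (cases "h p") auto
  have "sp \<le> tp" using hpt sp by simp
  then have phip: "lam * sp + 1/2 * (norm (p - w))\<^sup>2 \<le> g z" using lam z by (simp add: g_def)
  show ?thesis
  proof (intro exI allI)
    fix u
    show "ereal lam * h p + ereal (1/2 * (norm (p - w))\<^sup>2) \<le> ereal lam * h u + ereal (1/2 * (norm (u - w))\<^sup>2)"
    proof (cases "h u")
      case (real s)
      have "lam * sp + 1/2 * (norm (p - w))\<^sup>2 \<le> lam * s + 1/2 * (norm (u - w))\<^sup>2"
      proof (cases "lam * s + 1/2 * (norm (u - w))\<^sup>2 \<le> M")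
        case True
        then have "(u, s) \<in> K" using real by (simp add: K_def ext_epigraph_def g_def)
        then show ?thesis using zmin[of "(u,s)"] phip by (simp add: g_def)
      next
        case False then show ?thesis using phip gzM by linarith
      qed
      then show ?thesis using sp real by simp
    qed (use ninf lam sp in auto)
  qed
qed

theorem mainTheorem6:
  fixes f :: "'a::euclidean_space \<Rightarrow> real" and gradf :: "'a \<Rightarrow> 'a"
    and h :: "'a \<Rightarrow> ereal" and x :: 'a and lam :: real
  assumes f_convex: "convex_on UNIV f"
    and f_grad: "\<And>y. (f has_derivative (\<lambda>v. gradf y \<bullet> v)) (at y)"
    and h_proper: "proper_fun h" and h_closed: "closed_fun h" and h_convex: "convex_fun h"
    and lam_pos: "lam > 0"
    and ls: "LS f gradf h x lam"
  shows "ereal (f (x - lam *\<^sub>R grad_map gradf lam h x)) + h (x - lam *\<^sub>R grad_map gradf lam h x)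
         \<le> ereal (f x) + h x - ereal (lam / 2 * (norm (grad_map gradf lam h x))\<^sup>2)"
proof -
  have ninf: "\<And>u. h u \<noteq> -\<infinity>" using h_proper unfolding proper_fun_def by auto
  define g where "g = gradf x"
  define w where "w = x - lam *\<^sub>R g"
  define phi where "phi = (\<lambda>u. ereal lam * h u + ereal (1/2 * (norm (u - w))\<^sup>2))"
  define p where "p = prox lam h w"
  define G where "G = grad_map gradf lam h x"
  have Gdef: "G = (1 / lam) *\<^sub>R (x - p)" unfolding G_def grad_map_def p_def w_def g_def by simp
  have xp: "x - lam *\<^sub>R G = p" using lam_pos by (simp add: Gdef)
  obtain p0 where p0: "\<And>u. phi p0 \<le> phi u"
    using prox_exists[OF h_proper h_closed h_convex lam_pos, of w] unfolding phi_def by blast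
  have pmin: "\<And>u. phi p \<le> phi u"
    unfolding p_def prox_def phi_def[symmetric]
    by (rule arg_minI[of "\<lambda>_. True" p0]) (use p0 in \<open>auto simp: not_less\<close>)
  show ?thesis
  proof (cases "h x")
    case PInf
    then show ?thesis by simp
  next
    case MInf
    then show ?thesis using ninf by simp
  next
    case (real hx)
    have "h p \<noteq> \<infinity>"
    proof
      assume "h p = \<infinity>"
      then have "phi p = \<infinity>" using lam_pos by (simp add: phi_def)
      moreover have "phi x \<noteq> \<infinity>" using real by (simp add: phi_def)
      ultimately show False using pmin[of x] by simp
    qed
    then obtain hp where hp: "h p = ereal hp" using ninf[of p] by (cases "h p") auto
    define d where "d = x - p"
    have step: "lam * hp \<le> lam * hx + (p - w) \<bullet> d + t / 2 * (norm d)\<^sup>2"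
      if t: "0 < t" "t \<le> 1" for t
    proof -
      define q where "q = (1 - t) *\<^sub>R p + t *\<^sub>R x"
      have "(p, hp) \<in> ext_epigraph h" "(x, hx) \<in> ext_epigraph h"
        using hp real by (auto simp: ext_epigraph_def)
      then have "(1 - t) *\<^sub>R (p, hp) + t *\<^sub>R (x, hx) \<in> ext_epigraph h"
        by (intro convexD[OF h_convex[unfolded convex_fun_def]]) (use t in auto)
      then have hq: "h q \<le> ereal ((1 - t) * hp + t * hx)"
        by (simp add: ext_epigraph_def q_def)
      then obtain hq where hq': "h q = ereal hq" using ninf[of q] by (cases "h q") auto
      have hqle: "hq \<le> (1 - t) * hp + t * hx" using hq hq' by simp
      have "phi p \<le> phi q" by (rule pmin)
      then have A: "lam * hp + 1/2 * (norm (p - w))\<^sup>2 \<le> lam * hq + 1/2 * (norm (q - w))\<^sup>2"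
        using hp hq' by (simp add: phi_def)
      have qw: "q - w = (p - w) + t *\<^sub>R d" by (simp add: q_def d_def algebra_simps)
      have nq: "(norm (q - w))\<^sup>2 = (norm (p - w))\<^sup>2 + 2 * t * ((p - w) \<bullet> d) + t^2 * (norm d)\<^sup>2"
        unfolding qw power2_norm_eq_inner by (simp add: algebra_simps inner_commute power2_eq_square)
      have "lam * hq \<le> lam * ((1 - t) * hp + t * hx)" using hqle lam_pos by (intro mult_left_mono) auto
      then have "t * (lam * hp) \<le> t * (lam * hx + (p - w) \<bullet> d + t / 2 * (norm d)\<^sup>2)"
        using A nq by (simp add: algebra_simps power2_eq_square)
      then show ?thesis using t by simp
    qed
    have opt: "lam * hp \<le> lam * hx + (p - w) \<bullet> d"
    proof (rule ccontr)
      assume "\<not> ?thesis"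
      then have dl: "lam * hp - lam * hx - (p - w) \<bullet> d > 0" (is "?D > 0") by simp
      define E where "E = (norm d)\<^sup>2 + 1"
      have E0: "E > 0" "(norm d)\<^sup>2 < E" unfolding E_def using zero_le_power2[of "norm d"] by linarith+
      define t where "t = min 1 (?D / E)"
      have "?D / E > 0" using dl E0 by simp
      then have t0: "0 < t" "t \<le> 1" by (auto simp: t_def)
      have "t * (norm d)\<^sup>2 \<le> ?D / E * (norm d)\<^sup>2"
        by (intro mult_right_mono) (auto simp: t_def)
      also have "\<dots> \<le> ?D / E * E"
        using E0 \<open>?D / E > 0\<close> by (intro mult_left_mono) auto
      also have "\<dots> = ?D" using E0 by simp
      finally have "t * (norm d)\<^sup>2 \<le> ?D" .
      then have "t / 2 * (norm d)\<^sup>2 < ?D" using dl by simp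
      then show False using step[OF t0] by simp
    qed
    have dG: "d = lam *\<^sub>R G" using xp d_def by auto
    have pw: "p - w = lam *\<^sub>R (g - G)" using xp by (simp add: w_def algebra_simps)
    have "(p - w) \<bullet> d = lam * lam * (g \<bullet> G - (norm G)\<^sup>2)"
      by (simp add: dG pw inner_diff_left power2_norm_eq_inner)
    with opt have "lam * hp \<le> lam * (hx + lam * (g \<bullet> G) - lam * (norm G)\<^sup>2)"
      by (simp add: algebra_simps)
    then have hineq: "hp \<le> hx + lam * (g \<bullet> G) - lam * (norm G)\<^sup>2" using lam_pos by simp
    have mid: "(1 - 1/2) *\<^sub>R x + (1/2) *\<^sub>R (x - (2 * lam) *\<^sub>R G) = ((1 - 1/2) + 1/2) *\<^sub>R x - ((1/2) * (2 * lam)) *\<^sub>R G"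
      by (simp only: scaleR_diff_right scaleR_add_left scaleR_scaleR) (simp add: algebra_simps)
    have "p = (1 - 1/2) *\<^sub>R x + (1/2) *\<^sub>R (x - (2 * lam) *\<^sub>R G)"
      using xp mid by simp
    then have "f p \<le> (1 - 1/2) * f x + 1/2 * f (x - (2 * lam) *\<^sub>R G)"
      using convex_onD[OF f_convex, of "1/2" x "x - (2 * lam) *\<^sub>R G"] by simp
    moreover have "f (x - (2 * lam) *\<^sub>R G) \<le> f p - lam * (G \<bullet> g) + lam / 2 * (norm G)\<^sup>2"
      using ls xp unfolding LS_def G_def[symmetric] g_def[symmetric] by (simp add: Let_def)
    ultimately have fineq: "f p \<le> f x - lam * (g \<bullet> G) + lam / 2 * (norm G)\<^sup>2"
      by (simp add: inner_commute)
    have "f p + hp \<le> f x + hx - lam / 2 * (norm G)\<^sup>2" using fineq hineq by simp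
    then show ?thesis unfolding G_def[symmetric] xp using hp real by simp
  qed
qed

end
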